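(* Consider the following game with identity groups. There are $N$ agents, parameters $A>0$, $M>0$, $G\in(1/N,1)$, initial elite size $E^0<1/G$, altruism parameter $\alpha\in(0,1)$, and $f:[0,\infty)\to[0,\infty)$ strictly increasing and concave with $f(0)=0$, $Af'(0)>1$, $Af'(\infty)<1$. Suppose all initial elite agents belong to a single group $j$ (i.e. $p_j^{elite}=1$). Then an increase in the population share $p_j^{tot}$ of group $j$ can cause the elite to switch to providing public goods: there exist parameter values and shares $p<p'$ such that in equilibrium the elite does not provide public goods when $p_j^{tot}=p$, but does provide public goods when $p_j^{tot}=p'$.
   Context: Base model. There are $N$ agents; each is either elite (has property rights) or disenfranchised. Initially $E^0$ agents are elite. Each agent $i$ is endowed with raw materials $M$ and chooses investment $I_i\ge 0$ producing $Af(I_i)$ finished goods; resources $R_i=Af(I_i)+M$. Timing: (Stage 1) a uniformly random initial elite agent chooses $E\in[E^0,N]$ (fractional allowed); $E-E^0$ uniformly random initially disenfranchised agents become elite. (Stage 2) all agents simultaneously choose $I_i\ge0$. (Stage 3) a uniformly random elite agent chooses $V\in\{S,P\}$: under $S$ the total resources $X$ of the disenfranchised are split equally among the $E$ elite; under $P$, $X$ is converted to $G X$ units of a public good benefiting every agent equally; indifference resolved in favour of $P$. Material payoffs: disenfranchised $\Pi_d=GX-I_d$ under $P$ and $\Pi_d=-I_d$ under $S$; elite $\Pi_e=GX+R_e-I_e$ under $P$ and $\Pi_e=X/E+R_e-I_e$ under $S$. Identity extension: each agent belongs to an exogenous group $j\in J$; group $j$ makes up fraction $p_j^{tot}$ of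 the population and fraction $p_j^{elite}$ of the initial elite; $q_j=\frac{p_j^{elite}}{p_j^{tot}}\cdot\frac{E}{N}$ is the fraction of group-$j$ agents in the elite. An agent of type $i\in\{d,e\}$ in group $j$ has utility $U_i^j=\Pi_i+\alpha\big(q_j\Pi_e+(1-q_j)\Pi_d\big)$. Equilibrium means pure-strategy subgame perfect Nash equilibrium. *)

theory Defs
  imports "HOL-Analysis.Analysis"
begin

text \<open>All agents of the same type and group are treated symmetrically; agent counts
  may be fractional (the elite size E is a real number in [E0, N]).\<close>

datatype policy = S | P

record params =
  nN    :: nat
  aA    :: real
  mM    :: real
  gG    :: real
  eE0   :: nat
  alph  :: real
  fprod :: "real \<Rightarrow> real"

definition valid_params :: "params \<Rightarrow> bool" where
  "valid_params pr \<longleftrightarrow>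
     aA pr > 0 \<and> mM pr > 0 \<and>
     1 / real (nN pr) < gG pr \<and> gG pr < 1 \<and>
     1 \<le> eE0 pr \<and> real (eE0 pr) < 1 / gG pr \<and>
     0 < alph pr \<and> alph pr < 1 \<and>
     fprod pr 0 = 0 \<and>
     (\<forall>x\<ge>0. fprod pr x \<ge> 0) \<and>
     (\<forall>x y. 0 \<le> x \<longrightarrow> x < y \<longrightarrow> fprod pr x < fprod pr y) \<and>
     concave_on {0..} (fprod pr) \<and>
     (\<exists>f'. (\<forall>x\<ge>0. (fprod pr has_real_derivative f' x) (at x within {0..})) \<and>
           aA pr * f' 0 > 1 \<and>
           (\<exists>L. (f' \<longlongrightarrow> L) at_top \<and> aA pr * L < 1))"

definition res :: "params \<Rightarrow> real \<Rightarrow> real" where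
  "res pr I = aA pr * fprod pr I + mM pr"

text \<open>q_j = (p_j^elite / p_j^tot) * (E / N), here with p_j^elite = 1 and p_j^tot = p.\<close>
definition qj :: "params \<Rightarrow> real \<Rightarrow> real \<Rightarrow> real" where
  "qj pr p E = (1 / p) * (E / real (nN pr))"

definition pi_d :: "params \<Rightarrow> policy \<Rightarrow> real \<Rightarrow> real \<Rightarrow> real" where
  "pi_d pr V X I = (case V of P \<Rightarrow> gG pr * X | S \<Rightarrow> 0) - I"

definition pi_e :: "params \<Rightarrow> policy \<Rightarrow> real \<Rightarrow> real \<Rightarrow> real \<Rightarrow> real" where
  "pi_e pr V E X I = (case V of P \<Rightarrow> gG pr * X | S \<Rightarrow> X / E) + res pr I - I"

definition id_util :: "params \<Rightarrow> real \<Rightarrow> real \<Rightarrow> real \<Rightarrow> real \<Rightarrow> real" where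
  "id_util pr q own pe pd = own + alph pr * (q * pe + (1 - q) * pd)"

text \<open>Type-symmetric investment profile: elite (all in group j), disenfranchised
  in group j, disenfranchised in other groups.\<close>
record inv =
  iE  :: real
  iDj :: real
  iDo :: real

text \<open>Total resources X of the disenfranchised: p N - E of them are in group j,
  (1 - p) N in the other groups.\<close>
definition Xdis :: "params \<Rightarrow> real \<Rightarrow> real \<Rightarrow> inv \<Rightarrow> real" where
  "Xdis pr p E s = (p * real (nN pr) - E) * res pr (iDj s)
                  + ((1 - p) * real (nN pr)) * res pr (iDo s)"

text \<open>Utilities of the three classes of agents, given the policy V, elite size E,
  disenfranchised resources X, the agent's own investment I and the profile s
  (for the payoff of the other type within the agent's group).\<close>
definition U_ej :: "params \<Rightarrow> real \<Rightarrow> policy \<Rightarrow> real \<Rightarrow> real \<Rightarrow> real \<Rightarrow> inv \<Rightarrow> real" where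
  "U_ej pr p V E X I s =
     id_util pr (qj pr p E) (pi_e pr V E X I) (pi_e pr V E X I) (pi_d pr V X (iDj s))"

definition U_dj :: "params \<Rightarrow> real \<Rightarrow> policy \<Rightarrow> real \<Rightarrow> real \<Rightarrow> real \<Rightarrow> inv \<Rightarrow> real" where
  "U_dj pr p V E X I s =
     id_util pr (qj pr p E) (pi_d pr V X I) (pi_e pr V E X (iE s)) (pi_d pr V X I)"

text \<open>Other groups have p_k^elite = 0, hence q_k = 0.\<close>
definition U_do :: "params \<Rightarrow> policy \<Rightarrow> real \<Rightarrow> real \<Rightarrow> real \<Rightarrow> inv \<Rightarrow> real" where
  "U_do pr V E X I s =
     id_util pr 0 (pi_d pr V X I) (pi_e pr V E X (iE s)) (pi_d pr V X I)"

definition decide :: "params \<Rightarrow> real \<Rightarrow> real \<Rightarrow> real \<Rightarrow> inv \<Rightarrow> policy" where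
  "decide pr p E X s =
     (if U_ej pr p P E X (iE s) s \<ge> U_ej pr p S E X (iE s) s then P else S)"

text \<open>Stage 2: Nash equilibrium in investments in the subgame after E,
  with unilateral deviations of a single agent (which change X by the
  deviator's change in resources if disenfranchised) and stage-3 play
  recomputed after the deviation.\<close>
definition stage2_eq :: "params \<Rightarrow> real \<Rightarrow> real \<Rightarrow> inv \<Rightarrow> bool" where
  "stage2_eq pr p E s \<longleftrightarrow>
     iE s \<ge> 0 \<and> iDj s \<ge> 0 \<and> iDo s \<ge> 0 \<and>
     (let X = Xdis pr p E s; V = decide pr p E X s in
       (\<forall>I\<ge>0. U_ej pr p (decide pr p E X s) E X I s \<le> U_ej pr p V E X (iE s) s) \<and>
       (\<forall>I\<ge>0. let X' = X + res pr I - res pr (iDj s) in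
                U_dj pr p (decide pr p E X' s) E X' I s \<le> U_dj pr p V E X (iDj s) s) \<and>
       (\<forall>I\<ge>0. let X' = X + res pr I - res pr (iDo s) in
                U_do pr (decide pr p E X' s) E X' I s \<le> U_do pr V E X (iDo s) s))"

definition outcome :: "params \<Rightarrow> real \<Rightarrow> real \<Rightarrow> inv \<Rightarrow> policy" where
  "outcome pr p E s = decide pr p E (Xdis pr p E s) s"

definition W :: "params \<Rightarrow> real \<Rightarrow> real \<Rightarrow> inv \<Rightarrow> real" where
  "W pr p E s = U_ej pr p (outcome pr p E s) E (Xdis pr p E s) (iE s) s"

definition spne :: "params \<Rightarrow> real \<Rightarrow> real \<Rightarrow> (real \<Rightarrow> inv) \<Rightarrow> bool" where
  "spne pr p Estar strat \<longleftrightarrow>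
     real (eE0 pr) \<le> Estar \<and> Estar \<le> real (nN pr) \<and>
     (\<forall>E. real (eE0 pr) \<le> E \<and> E \<le> real (nN pr) \<longrightarrow> stage2_eq pr p E (strat E)) \<and>
     (\<forall>E. real (eE0 pr) \<le> E \<and> E \<le> real (nN pr) \<longrightarrow> W pr p E (strat E) \<le> W pr p Estar (strat Estar))"

definition eq_policy :: "params \<Rightarrow> real \<Rightarrow> real \<Rightarrow> (real \<Rightarrow> inv) \<Rightarrow> policy" where
  "eq_policy pr p Estar strat = outcome pr p Estar (strat Estar)"

end

theory Submission
  imports Defs
begin

definition f0 :: "real \<Rightarrow> real" where "f0 x = x / (1 + x)"

definition pr0 :: params where
  "pr0 = \<lparr>nN = 4, aA = 25/16, mM = 1, gG = 12/25, eE0 = 2, alph = 1/10, fprod = f0\<rparr>"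

lemma pr0_simps[simp]: "nN pr0 = 4" "aA pr0 = 25/16" "mM pr0 = 1" "gG pr0 = 12/25"
  "eE0 pr0 = 2" "alph pr0 = 1/10" "fprod pr0 = f0"
  by (simp_all add: pr0_def)

lemma f0_deriv: "x \<ge> 0 \<Longrightarrow> (f0 has_real_derivative 1/(1+x)^2) (at x)"
  unfolding f0_def
  by (rule derivative_eq_intros refl | simp)+ (simp add: field_simps power2_eq_square)

lemma f0_concave: "concave_on {0..} f0"
  unfolding concave_on_def
proof (rule convex_on_realI[where f' = "\<lambda>x. - (1/(1+x)^2)"])
  show "connected {0::real..}" by simp
  fix x :: real assume "x \<in> {0..}"
  then show "((\<lambda>x. - f0 x) has_real_derivative - (1/(1+x)^2)) (at x)"
    using f0_deriv by (auto intro: derivative_eq_intros)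
next
  fix x y :: real assume "x \<in> {0..}" "y \<in> {0..}" "x \<le> y"
  then show "- (1/(1+x)^2) \<le> - (1/(1+y)^2)"
    by (auto intro!: divide_left_mono power_mono mult_pos_pos)
qed

lemma f0_le: "x \<ge> 0 \<Longrightarrow> f0 x \<le> x"
  unfolding f0_def by (simp add: field_simps)
lemma f0_lt: "x > 0 \<Longrightarrow> f0 x < x"
  unfolding f0_def by (simp add: field_simps)
lemma f0_nonneg: "x \<ge> 0 \<Longrightarrow> f0 x \<ge> 0"
  unfolding f0_def by simp
lemma f0_mono: "0 \<le> x \<Longrightarrow> x < y \<Longrightarrow> f0 x < f0 y"
  by (auto simp: f0_def field_simps)

lemma f0_max: "x \<ge> 0 \<Longrightarrow> 25/16 * f0 x - x \<le> 1/16"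
proof -
  assume x: "x \<ge> 0"
  have "0 \<le> (x - 1/4)^2" by simp
  moreover have "(1/16 + x) * (1 + x) - 25/16 * x = (x - 1/4)^2"
    by (simp add: power2_eq_square algebra_simps)
  ultimately have "25/16 * x \<le> (1/16 + x) * (1 + x)" by linarith
  then show ?thesis using x unfolding f0_def by (simp add: field_simps)
qed

lemma lim0: "((\<lambda>x::real. 1/(1+x)^2) \<longlongrightarrow> 0) at_top"
proof -
  have "filterlim (\<lambda>x::real. 1 + x) at_top at_top"
    by (rule filterlim_tendsto_add_at_top[OF tendsto_const filterlim_ident])
  then have "filterlim (\<lambda>x::real. (1+x)^2) at_top at_top"
    using filterlim_pow_at_top[of 2] by simp
  then have "((\<lambda>x::real. inverse ((1+x)^2)) \<longlongrightarrow> 0) at_top"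
    by (rule tendsto_inverse_0_at_top)
  then show ?thesis by (simp add: inverse_eq_divide)
qed

lemma valid: "valid_params pr0"
proof -
  have d: "\<forall>x\<ge>0. (f0 has_real_derivative (\<lambda>x. 1/(1+x)^2) x) (at x within {0..})"
    using f0_deriv has_field_derivative_at_within by blast
  have "\<exists>f'. (\<forall>x\<ge>0. (f0 has_real_derivative f' x) (at x within {0..})) \<and>
          1 < 25 / 16 * f' 0 \<and> (\<exists>L. (f' \<longlongrightarrow> L) at_top \<and> 25 / 16 * L < 1)"
    apply (rule exI[of _ "\<lambda>x. 1/(1+x)^2"])
    using d lim0 by auto
  then show ?thesis
    unfolding valid_params_def using f0_concave f0_mono f0_nonneg
    by (simp add: f0_def)
qed

lemma U_ej_eq: "U_ej pr p V E X I s = (1 + alph pr * qj pr p E) * ((case V of P \<Rightarrow> gG pr * X | S \<Rightarrow> X / E) + res pr I - I)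
   + alph pr * (1 - qj pr p E) * ((case V of P \<Rightarrow> gG pr * X | S \<Rightarrow> 0) - iDj s)"
  by (cases V) (simp_all add: U_ej_def id_util_def pi_e_def pi_d_def algebra_simps)

lemma decide_eq: "decide pr p E X s =
   (if 0 \<le> X * (gG pr * (1 + alph pr) - (1 + alph pr * qj pr p E) / E) then P else S)"
proof -
  have "U_ej pr p P E X (iE s) s - U_ej pr p S E X (iE s) s
      = X * (gG pr * (1 + alph pr) - (1 + alph pr * qj pr p E) / E)"
    by (simp add: U_ej_eq algebra_simps diff_divide_distrib add_divide_distrib)
  then show ?thesis unfolding decide_def by auto
qed

definition phi :: "real \<Rightarrow> real \<Rightarrow> real \<Rightarrow> real \<Rightarrow> real" where
  "phi c a b z = (if 0 \<le> z * c then a * z else b * z)"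

lemma U_dj_dec: "U_dj pr p (decide pr p E z s) E z I s =
   phi (gG pr * (1 + alph pr) - (1 + alph pr * qj pr p E) / E)
       ((1 + alph pr) * gG pr) (alph pr * qj pr p E / E) z
   - (1 + alph pr * (1 - qj pr p E)) * I + alph pr * qj pr p E * (res pr (iE s) - iE s)"
  unfolding decide_eq phi_def
  by (simp add: U_dj_def id_util_def pi_e_def pi_d_def algebra_simps)

lemma U_do_dec: "U_do pr (decide pr p E z s) E z I s =
   phi (gG pr * (1 + alph pr) - (1 + alph pr * qj pr p E) / E)
       ((1 + alph pr) * gG pr) 0 z - (1 + alph pr) * I"
  unfolding decide_eq phi_def
  by (simp add: U_do_def id_util_def pi_e_def pi_d_def algebra_simps)

lemma phi_lip:
  assumes "0 \<le> a" "a \<le> L" "0 \<le> b" "b \<le> L" "x \<le> y"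
  shows "phi c a b y - phi c a b x \<le> L * (y - x)"
proof -
  have up: "phi c a b z \<le> L * z" if "z \<ge> 0" for z
    using assms that mult_right_mono unfolding phi_def by auto
  have lo: "phi c a b z \<ge> L * z" if "z \<le> 0" for z
    using assms that mult_right_mono_neg unfolding phi_def by auto
  have z0: "phi c a b 0 = 0" unfolding phi_def by simp
  consider "x < 0 \<and> 0 < y" | "x = 0" | "y = 0" | "0 < x" | "y < 0"
    using assms(5) by linarith
  then show ?thesis
  proof cases
    case 1
    then show ?thesis using up[of y] lo[of x] by (simp add: algebra_simps)
  next
    case 2
    then show ?thesis using up[of y] z0 assms(5) by simp
  next
    case 3
    then show ?thesis using lo[of x] z0 assms(5) by simp
  next
    case 4
    then have "(0 \<le> y * c) = (0 \<le> x * c)"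
      using assms(5) by (auto simp: zero_le_mult_iff)
    moreover have "a*(y-x) \<le> L*(y-x)" "b*(y-x) \<le> L*(y-x)"
      using assms by (auto intro: mult_right_mono)
    ultimately show ?thesis unfolding phi_def
      by (auto simp: algebra_simps)
  next
    case 5
    then have "(0 \<le> y * c) = (0 \<le> x * c)"
      using assms(5) by (auto simp: zero_le_mult_iff)
    moreover have "a*(y-x) \<le> L*(y-x)" "b*(y-x) \<le> L*(y-x)"
      using assms by (auto intro: mult_right_mono)
    ultimately show ?thesis unfolding phi_def
      by (auto simp: algebra_simps)
  qed
qed

lemma res_pr0: "res pr0 x = 25/16 * f0 x + 1"
  by (simp add: res_def)

lemma res_facts: "res pr0 0 = 1" "res pr0 (1/4) - 1/4 = 17/16"
  "x \<ge> 0 \<Longrightarrow> res pr0 x - x \<le> 17/16"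
  using f0_max[of x] by (auto simp: res_pr0 f0_def)

lemma q_bounds:
  assumes "1/2 \<le> p" "p \<le> 1" "2 \<le> E" "E \<le> 4"
  shows "1/2 \<le> qj pr0 p E" "qj pr0 p E \<le> 2" "0 \<le> 1/10 * qj pr0 p E / E"
    "1/10 * qj pr0 p E / E \<le> 66/125"
proof -
  have e: "qj pr0 p E = E / (4*p)" by (simp add: qj_def)
  show "1/2 \<le> qj pr0 p E" unfolding e using assms by (simp add: field_simps)
  show "qj pr0 p E \<le> 2" unfolding e using assms by (simp add: field_simps)
  show "0 \<le> 1/10 * qj pr0 p E / E" unfolding e using assms by simp
  have "1/10 * qj pr0 p E / E = 1 / (40 * p)" unfolding e using assms by (simp add: field_simps)
  also have "\<dots> \<le> 66/125" using assms by (simp add: field_simps)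
  finally show "1/10 * qj pr0 p E / E \<le> 66/125" .
qed

abbreviation "cc p E \<equiv> gG pr0 * (1 + alph pr0) - (1 + alph pr0 * qj pr0 p E) / E"
abbreviation "sP \<equiv> (1 + alph pr0) * gG pr0"

lemma dj_diff: "U_dj pr0 p (decide pr0 p E X' s) E X' J s - U_dj pr0 p (decide pr0 p E X s) E X I s
   = phi (cc p E) sP (alph pr0 * qj pr0 p E / E) X' - phi (cc p E) sP (alph pr0 * qj pr0 p E / E) X
     - (1 + alph pr0 * (1 - qj pr0 p E)) * (J - I)"
  unfolding U_dj_dec by (simp only: algebra_simps)

lemma do_diff: "U_do pr0 (decide pr0 p E X' s) E X' J s - U_do pr0 (decide pr0 p E X s) E X I s
   = phi (cc p E) sP 0 X' - phi (cc p E) sP 0 X - (1 + alph pr0) * (J - I)"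
  unfolding U_do_dec by (simp only: algebra_simps)

lemma dj_dev:
  fixes X :: real and s :: inv
  assumes "1/2 \<le> p" "p \<le> 1" "2 \<le> E" "E \<le> 4" "f0 I \<le> f0 J"
  defines "X' \<equiv> X + res pr0 J - res pr0 I"
  shows "U_dj pr0 p (decide pr0 p E X' s) E X' J s - U_dj pr0 p (decide pr0 p E X s) E X I s
         \<le> 33/40 * (f0 J - f0 I) - (1 + 1/10 * (1 - qj pr0 p E)) * (J - I)"
proof -
  note qb = q_bounds[OF assms(1-4)]
  have "X \<le> X'" unfolding X'_def res_pr0 using assms(5) by simp
  then have "phi (cc p E) sP (alph pr0 * qj pr0 p E / E) X'
     - phi (cc p E) sP (alph pr0 * qj pr0 p E / E) X \<le> 66/125 * (X' - X)"
    using qb by (intro phi_lip) auto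
  moreover have "X' - X = 25/16 * (f0 J - f0 I)" unfolding X'_def res_pr0 by simp
  ultimately show ?thesis unfolding dj_diff by simp
qed

lemma dj_dev2:
  fixes X :: real and s :: inv
  assumes "1/2 \<le> p" "p \<le> 1" "2 \<le> E" "E \<le> 4" "f0 J \<le> f0 I"
  defines "X' \<equiv> X + res pr0 J - res pr0 I"
  shows "U_dj pr0 p (decide pr0 p E X' s) E X' J s - U_dj pr0 p (decide pr0 p E X s) E X I s
         \<ge> 33/40 * (f0 J - f0 I) - (1 + 1/10 * (1 - qj pr0 p E)) * (J - I)"
proof -
  note qb = q_bounds[OF assms(1-4)]
  have "X' \<le> X" unfolding X'_def res_pr0 using assms(5) by simp
  then have "phi (cc p E) sP (alph pr0 * qj pr0 p E / E) X
     - phi (cc p E) sP (alph pr0 * qj pr0 p E / E) X' \<le> 66/125 * (X - X')"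
    using qb by (intro phi_lip) auto
  moreover have "X' - X = 25/16 * (f0 J - f0 I)" unfolding X'_def res_pr0 by simp
  ultimately show ?thesis unfolding dj_diff by simp
qed

lemma do_dev:
  fixes X :: real and s :: inv
  assumes "f0 I \<le> f0 J"
  defines "X' \<equiv> X + res pr0 J - res pr0 I"
  shows "U_do pr0 (decide pr0 p E X' s) E X' J s - U_do pr0 (decide pr0 p E X s) E X I s
         \<le> 33/40 * (f0 J - f0 I) - (11/10) * (J - I)"
proof -
  have "X \<le> X'" unfolding X'_def res_pr0 using assms by simp
  then have "phi (cc p E) sP 0 X' - phi (cc p E) sP 0 X \<le> 66/125 * (X' - X)"
    by (intro phi_lip) auto
  moreover have "X' - X = 25/16 * (f0 J - f0 I)" unfolding X'_def res_pr0 by simp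
  ultimately show ?thesis unfolding do_diff by simp
qed

lemma do_dev2:
  fixes X :: real and s :: inv
  assumes "f0 J \<le> f0 I"
  defines "X' \<equiv> X + res pr0 J - res pr0 I"
  shows "U_do pr0 (decide pr0 p E X' s) E X' J s - U_do pr0 (decide pr0 p E X s) E X I s
         \<ge> 33/40 * (f0 J - f0 I) - (11/10) * (J - I)"
proof -
  have "X' \<le> X" unfolding X'_def res_pr0 using assms by simp
  then have "phi (cc p E) sP 0 X - phi (cc p E) sP 0 X' \<le> 66/125 * (X - X')"
    by (intro phi_lip) auto
  moreover have "X' - X = 25/16 * (f0 J - f0 I)" unfolding X'_def res_pr0 by simp
  ultimately show ?thesis unfolding do_diff by simp
qed

lemma lin_helper: "(a::real) \<le> u' - u \<Longrightarrow> u' \<le> u \<Longrightarrow> a \<le> 0" by simp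
lemma lemA: "9/10*d \<le> (B::real) \<Longrightarrow> B - 33/40*F \<le> 0 \<Longrightarrow> F < d \<Longrightarrow> 0 < d \<Longrightarrow> False"
  by linarith
lemma lemB: "9/10*I \<le> (B::real) \<Longrightarrow> F \<le> I \<Longrightarrow> 0 \<le> I \<Longrightarrow> 33/40*F - B \<le> 0"
  by linarith
lemma lin_helper2: "u' - u \<le> (a::real) \<Longrightarrow> a \<le> 0 \<Longrightarrow> u' \<le> u" by simp

definition s0 :: inv where "s0 = \<lparr>iE = 1/4, iDj = 0, iDo = 0\<rparr>"

lemma s0_simps[simp]: "iE s0 = 1/4" "iDj s0 = 0" "iDo s0 = 0"
  by (simp_all add: s0_def)

lemma elite_dev: "U_ej pr p V E X I s - U_ej pr p V E X J s
   = (1 + alph pr * qj pr p E) * ((res pr I - I) - (res pr J - J))"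
  unfolding U_ej_eq by (simp only: algebra_simps)

lemma s2_exist:
  assumes "1/2 \<le> p" "p \<le> 1" "2 \<le> E" "E \<le> 4"
  shows "stage2_eq pr0 p E s0"
proof -
  note qb = q_bounds[OF assms]
  have el: "U_ej pr0 p V E X I s0 \<le> U_ej pr0 p V E X (iE s0) s0" if "I \<ge> 0" for V X I
  proof -
    have "(1 + alph pr0 * qj pr0 p E) * ((res pr0 I - I) - (res pr0 (1/4) - 1/4)) \<le> 0"
      using res_facts(2) res_facts(3)[of I] that qb by (intro mult_nonneg_nonpos) auto
    then show ?thesis using elite_dev[where pr=pr0 and p=p and V=V and E=E and X=X and I=I and s=s0 and J="1/4"] by simp
  qed
  have dj: "U_dj pr0 p (decide pr0 p E (X + res pr0 I - res pr0 0) s0) E (X + res pr0 I - res pr0 0) I s0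
      \<le> U_dj pr0 p (decide pr0 p E X s0) E X 0 s0" if "I \<ge> 0" for X I
  proof -
    have "f0 0 \<le> f0 I" using f0_nonneg[OF that] by (simp add: f0_def)
    note d = dj_dev[OF assms this, where X=X and s=s0]
    have "0 \<le> (2 - qj pr0 p E) * I" using qb that by simp
    moreover have "(1 + 1/10 * (1 - qj pr0 p E)) * I - 9/10 * I = (2 - qj pr0 p E) * I / 10"
      by (simp add: field_simps)
    ultimately have nine: "(1 + 1/10 * (1 - qj pr0 p E)) * I \<ge> 9/10 * I" by linarith
    have e1: "33/40 * (f0 I - f0 0) - (1 + 1/10 * (1 - qj pr0 p E)) * (I - 0)
        = 33/40 * f0 I - (1 + 1/10 * (1 - qj pr0 p E)) * I" by (simp add: f0_def)
    have "33/40 * (f0 I - f0 0) - (1 + 1/10 * (1 - qj pr0 p E)) * (I - 0) \<le> 0"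
      unfolding e1 by (rule lemB[OF nine f0_le[OF that] that])
    then show ?thesis by (rule lin_helper2[OF d])
  qed
  have do: "U_do pr0 (decide pr0 p E (X + res pr0 I - res pr0 0) s0) E (X + res pr0 I - res pr0 0) I s0
      \<le> U_do pr0 (decide pr0 p E X s0) E X 0 s0" if "I \<ge> 0" for X I
  proof -
    have "f0 0 \<le> f0 I" using f0_nonneg[OF that] by (simp add: f0_def)
    note d = do_dev[OF this, where X=X and s=s0 and p=p and E=E]
    have e1: "33/40 * (f0 I - f0 0) - 11/10 * (I - 0) = 33/40 * f0 I - 11/10 * I" by (simp add: f0_def)
    have "33/40 * (f0 I - f0 0) - 11/10 * (I - 0) \<le> 0"
      unfolding e1 by (rule lemB[OF _ f0_le[OF that] that]) (use that in simp)
    then show ?thesis by (rule lin_helper2[OF d])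
  qed
  show ?thesis unfolding stage2_eq_def Let_def
    using el dj do by simp
qed

lemma s2_unique:
  assumes "1/2 \<le> p" "p \<le> 1" "2 \<le> E" "E \<le> 4" "stage2_eq pr0 p E s"
  shows "iDj s = 0" "iDo s = 0" "res pr0 (iE s) - iE s = 17/16"
proof -
  note qb = q_bounds[OF assms(1-4)]
  define X where "X = Xdis pr0 p E s"
  have nn: "iE s \<ge> 0" "iDj s \<ge> 0" "iDo s \<ge> 0" using assms(5) unfolding stage2_eq_def by auto
  have el: "U_ej pr0 p (decide pr0 p E X s) E X (1/4) s \<le> U_ej pr0 p (decide pr0 p E X s) E X (iE s) s"
    using assms(5) unfolding stage2_eq_def Let_def X_def by auto
  have dj: "U_dj pr0 p (decide pr0 p E (X + res pr0 0 - res pr0 (iDj s)) s) E (X + res pr0 0 - res pr0 (iDj s)) 0 s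
      \<le> U_dj pr0 p (decide pr0 p E X s) E X (iDj s) s"
    using assms(5) unfolding stage2_eq_def Let_def X_def by auto
  have do: "U_do pr0 (decide pr0 p E (X + res pr0 0 - res pr0 (iDo s)) s) E (X + res pr0 0 - res pr0 (iDo s)) 0 s
      \<le> U_do pr0 (decide pr0 p E X s) E X (iDo s) s"
    using assms(5) unfolding stage2_eq_def Let_def X_def by auto
  show "iDj s = 0"
  proof (rule ccontr)
    assume "iDj s \<noteq> 0"
    then have pos: "iDj s > 0" using nn by simp
    have "f0 0 \<le> f0 (iDj s)" using f0_nonneg[OF nn(2)] by (simp add: f0_def)
    note d = dj_dev2[OF assms(1-4) this, where X=X and s=s]
    have "0 \<le> (2 - qj pr0 p E) * iDj s" using qb nn by simp
    moreover have "(1 + 1/10 * (1 - qj pr0 p E)) * iDj s - 9/10 * iDj s = (2 - qj pr0 p E) * iDj s / 10"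
      by (simp add: field_simps)
    ultimately have "(1 + 1/10 * (1 - qj pr0 p E)) * iDj s \<ge> 9/10 * iDj s" by linarith
    moreover have "f0 0 = 0" by (simp add: f0_def)
    note nine = calculation
    have e1: "33/40 * (f0 0 - f0 (iDj s)) - (1 + 1/10 * (1 - qj pr0 p E)) * (0 - iDj s)
        = (1 + 1/10 * (1 - qj pr0 p E)) * iDj s - 33/40 * f0 (iDj s)" by (simp add: f0_def)
    have "33/40 * (f0 0 - f0 (iDj s)) - (1 + 1/10 * (1 - qj pr0 p E)) * (0 - iDj s) \<le> 0"
      by (rule lin_helper[OF d dj])
    then have "(1 + 1/10 * (1 - qj pr0 p E)) * iDj s - 33/40 * f0 (iDj s) \<le> 0" unfolding e1 .
    then show False using lemA[OF nine _ f0_lt[OF pos] pos] by blast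
  qed
  show "iDo s = 0"
  proof (rule ccontr)
    assume "iDo s \<noteq> 0"
    then have pos: "iDo s > 0" using nn by simp
    have "f0 0 \<le> f0 (iDo s)" using f0_nonneg[OF nn(3)] by (simp add: f0_def)
    note d = do_dev2[OF this, where X=X and s=s and p=p and E=E]
    moreover have "f0 0 = 0" by (simp add: f0_def)
    moreover have "33/40 * (f0 0 - f0 (iDo s)) - 11/10 * (0 - iDo s) \<le> 0"
      by (rule lin_helper[OF d do])
    ultimately show False using f0_lt[OF pos] pos by (simp add: algebra_simps)
  qed
  have "(1 + alph pr0 * qj pr0 p E) * ((res pr0 (1/4) - 1/4) - (res pr0 (iE s) - iE s)) \<le> 0"
    using el elite_dev[where pr=pr0 and p=p and V="decide pr0 p E X s" and E=E and X=X and I="1/4" and s=s and J="iE s"] by simp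
  then have "(res pr0 (1/4) - 1/4) - (res pr0 (iE s) - iE s) \<le> 0"
    using qb by (simp add: mult_le_0_iff)
  then show "res pr0 (iE s) - iE s = 17/16" using res_facts(2) res_facts(3)[OF nn(1)] by simp
qed

lemma Xdis_eq: "iDj s = 0 \<Longrightarrow> iDo s = 0 \<Longrightarrow> Xdis pr0 p E s = 4 - E"
  unfolding Xdis_def using res_facts(1) by (simp add: algebra_simps)

lemma W_gen:
  assumes "iDj s = 0" "iDo s = 0" "res pr0 (iE s) - iE s = 17/16"
  shows "outcome pr0 p E s = decide pr0 p E (4 - E) s"
    "W pr0 p E s = (case decide pr0 p E (4-E) s of
        P \<Rightarrow> (1 + qj pr0 p E/10) * (12/25*(4-E) + 17/16) + 1/10*(1 - qj pr0 p E)*(12/25*(4-E))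
      | S \<Rightarrow> (1 + qj pr0 p E/10)*((4-E)/E + 17/16))"
proof -
  have r: "res pr0 (iE s) = 17/16 + iE s" using assms(3) by simp
  show "outcome pr0 p E s = decide pr0 p E (4 - E) s"
    unfolding outcome_def Xdis_eq[OF assms(1,2)] ..
  show "W pr0 p E s = (case decide pr0 p E (4-E) s of
        P \<Rightarrow> (1 + qj pr0 p E/10) * (12/25*(4-E) + 17/16) + 1/10*(1 - qj pr0 p E)*(12/25*(4-E))
      | S \<Rightarrow> (1 + qj pr0 p E/10)*((4-E)/E + 17/16))"
    unfolding W_def outcome_def Xdis_eq[OF assms(1,2)] U_ej_eq
    by (cases "decide pr0 p E (4 - E) s") (simp_all add: r assms(1))
qed

lemma half_facts:
  assumes "2 \<le> E" "E \<le> 4" "iDj s = 0" "iDo s = 0" "res pr0 (iE s) - iE s = 17/16"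
  shows "outcome pr0 (1/2) E s = P \<Longrightarrow> W pr0 (1/2) E s < 363/160"
    "W pr0 (1/2) E s \<le> 363/160"
    "E = 2 \<Longrightarrow> outcome pr0 (1/2) E s = S \<and> W pr0 (1/2) E s = 363/160"
proof -
  have E0: "E > 0" using assms by simp
  have q: "qj pr0 (1/2) E = E/2" by (simp add: qj_def)
  have c: "gG pr0 * (1 + alph pr0) - (1 + alph pr0 * qj pr0 (1/2) E) / E = 239/500 - 1/E"
    unfolding q using E0 by (simp add: field_simps)
  have dec: "decide pr0 (1/2) E (4-E) s = (if 0 \<le> (4-E) * (239/500 - 1/E) then P else S)"
    unfolding decide_eq c ..
  note WG = W_gen[OF assms(3-5), where p="1/2" and E=E]
  have WP: "W pr0 (1/2) E s = 66/125*(4-E) + (1 + E/20)*(17/16)" if "decide pr0 (1/2) E (4-E) s = P"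
    unfolding WG that q by (simp add: field_simps)
  have WS: "W pr0 (1/2) E s = 4/E + 21/80 + E/320" if "decide pr0 (1/2) E (4-E) s = S"
    unfolding WG that q using E0 by (simp add: field_simps)
  have big: "E \<ge> 500/239" if "decide pr0 (1/2) E (4-E) s = P"
  proof (cases "E = 4")
    case False
    then have "0 \<le> 239/500 - 1/E" using that assms unfolding dec
      by (auto split: if_splits simp: zero_le_mult_iff)
    then have "1/E \<le> 239/500" by simp
    then show ?thesis using E0 by (simp add: field_simps)
  qed simp
  show "outcome pr0 (1/2) E s = P \<Longrightarrow> W pr0 (1/2) E s < 363/160"
  proof -
    assume "outcome pr0 (1/2) E s = P"
    then have d: "decide pr0 (1/2) E (4-E) s = P" using WG(1) by simp
    have "66/125*(4-E) + (1 + E/20)*(17/16) < 363/160" using big[OF d] by (simp add: field_simps)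
    then show ?thesis unfolding WP[OF d] .
  qed
  show "W pr0 (1/2) E s \<le> 363/160"
  proof (cases "decide pr0 (1/2) E (4-E) s")
    case P
    have "66/125*(4-E) + (1 + E/20)*(17/16) < 363/160" using big[OF P] by (simp add: field_simps)
    then show ?thesis unfolding WP[OF P] by simp
  next
    case S
    have "0 \<le> (E - 2) * (640 - E)" using assms by simp
    then have "4 \<le> E * (321/160 - E/320)" by (simp add: algebra_simps)
    then have "4/E \<le> 321/160 - E/320" using E0 by (simp add: pos_divide_le_eq mult.commute)
    then show ?thesis unfolding WS[OF S] by simp
  qed
  show "E = 2 \<Longrightarrow> outcome pr0 (1/2) E s = S \<and> W pr0 (1/2) E s = 363/160"
  proof -
    assume e: "E = 2"
    have d: "decide pr0 (1/2) E (4-E) s = S" using dec e by simp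
    then show ?thesis using WG(1) WS[OF d] e by simp
  qed
qed

lemma one_facts:
  assumes "2 \<le> E" "E \<le> 4" "iDj s = 0" "iDo s = 0" "res pr0 (iE s) - iE s = 17/16"
  shows "outcome pr0 1 E s = P"
    "W pr0 1 E s = 66/125*(4-E) + (1 + E/40)*(17/16)"
proof -
  have E0: "E > 0" using assms by simp
  have q: "qj pr0 1 E = E/4" by (simp add: qj_def)
  have c: "gG pr0 * (1 + alph pr0) - (1 + alph pr0 * qj pr0 1 E) / E = 503/1000 - 1/E"
    unfolding q using E0 by (simp add: field_simps)
  have "1/E \<le> 1/2" using assms by (simp add: field_simps)
  then have "0 \<le> 503/1000 - 1/E" by linarith
  then have "0 \<le> (4-E) * (503/1000 - 1/E)" using assms by (intro mult_nonneg_nonneg) auto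
  then have d: "decide pr0 1 E (4-E) s = P" unfolding decide_eq c by simp
  note WG = W_gen[OF assms(3-5), where p=1 and E=E]
  show "outcome pr0 1 E s = P" using WG(1) d by simp
  show "W pr0 1 E s = 66/125*(4-E) + (1 + E/40)*(17/16)"
    unfolding WG d q by (simp add: field_simps)
qed

lemma s0_facts: "iDj s0 = 0" "iDo s0 = 0" "res pr0 (iE s0) - iE s0 = 17/16"
  using res_facts(2) by simp_all

lemma spne_half: "spne pr0 (1/2) 2 (\<lambda>_. s0)"
  unfolding spne_def
proof (intro conjI allI impI)
  fix E :: real assume E: "real (eE0 pr0) \<le> E \<and> E \<le> real (nN pr0)"
  then show "stage2_eq pr0 (1/2) E s0" by (intro s2_exist) auto
  have "W pr0 (1/2) E s0 \<le> 363/160" using E by (intro half_facts(2)[OF _ _ s0_facts]) auto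
  moreover have "W pr0 (1/2) 2 s0 = 363/160" using half_facts(3)[OF _ _ s0_facts, of 2] by simp
  ultimately show "W pr0 (1/2) E s0 \<le> W pr0 (1/2) 2 s0" by simp
qed auto

lemma spne_one: "spne pr0 1 2 (\<lambda>_. s0)"
  unfolding spne_def
proof (intro conjI allI impI)
  fix E :: real assume E: "real (eE0 pr0) \<le> E \<and> E \<le> real (nN pr0)"
  then show "stage2_eq pr0 1 E s0" by (intro s2_exist) auto
  have e1: "W pr0 1 E s0 = 66/125*(4-E) + (1 + E/40)*(17/16)" using E by (intro one_facts(2)[OF _ _ s0_facts]) auto
  have e2: "W pr0 1 2 s0 = 66/125*(4-2) + (1 + 2/40)*(17/16)" by (intro one_facts(2)[OF _ _ s0_facts]) auto
  have "66/125*(4-E) + (1 + E/40)*(17/16) \<le> 66/125*(4-2) + (1 + 2/40)*(17/16)"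
    using E by (simp add: field_simps)
  then show "W pr0 1 E s0 \<le> W pr0 1 2 s0" unfolding e1 e2 .
qed auto

lemma all_half: "spne pr0 (1/2) Es sg \<Longrightarrow> eq_policy pr0 (1/2) Es sg = S"
proof -
  assume sp: "spne pr0 (1/2) Es sg"
  have Es: "2 \<le> Es" "Es \<le> 4" using sp unfolding spne_def by auto
  have st: "stage2_eq pr0 (1/2) E (sg E)" if "2 \<le> E" "E \<le> 4" for E
    using sp that unfolding spne_def by auto
  have le: "W pr0 (1/2) 2 (sg 2) \<le> W pr0 (1/2) Es (sg Es)"
    using sp unfolding spne_def by auto
  have u2: "iDj (sg 2) = 0" "iDo (sg 2) = 0" "res pr0 (iE (sg 2)) - iE (sg 2) = 17/16"
    using s2_unique[of "1/2" 2 "sg 2"] st[of 2] by auto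
  have uE: "iDj (sg Es) = 0" "iDo (sg Es) = 0" "res pr0 (iE (sg Es)) - iE (sg Es) = 17/16"
    using s2_unique[of "1/2" Es "sg Es"] st[OF Es] Es by auto
  have w2: "W pr0 (1/2) 2 (sg 2) = 363/160" using half_facts(3)[OF _ _ u2, of 2] by simp
  show ?thesis
  proof (rule ccontr)
    assume "eq_policy pr0 (1/2) Es sg \<noteq> S"
    then have "outcome pr0 (1/2) Es (sg Es) = P" unfolding eq_policy_def by (cases "outcome pr0 (1/2) Es (sg Es)") auto
    then have "W pr0 (1/2) Es (sg Es) < 363/160" using half_facts(1)[OF Es uE] Es uE by simp
    then show False using le w2 by simp
  qed
qed

lemma all_one: "spne pr0 1 Es sg \<Longrightarrow> eq_policy pr0 1 Es sg = P"
proof -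
  assume sp: "spne pr0 1 Es sg"
  have Es: "2 \<le> Es" "Es \<le> 4" using sp unfolding spne_def by auto
  have st: "stage2_eq pr0 1 Es (sg Es)" using sp Es unfolding spne_def by auto
  have uE: "iDj (sg Es) = 0" "iDo (sg Es) = 0" "res pr0 (iE (sg Es)) - iE (sg Es) = 17/16"
    using s2_unique[of 1 Es "sg Es"] st Es by auto
  show ?thesis unfolding eq_policy_def using one_facts(1)[OF Es uE] .
qed

theorem proposition3:
  shows "\<exists>pr p p'. valid_params pr \<and>
           0 < p \<and> p < p' \<and> p' \<le> 1 \<and>
           real (eE0 pr) \<le> p * real (nN pr) \<and>
           p * real (nN pr) \<in> \<nat> \<and> p' * real (nN pr) \<in> \<nat> \<and>
           (\<exists>Es sg. spne pr p Es sg) \<and>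
           (\<forall>Es sg. spne pr p Es sg \<longrightarrow> eq_policy pr p Es sg = S) \<and>
           (\<exists>Es sg. spne pr p' Es sg) \<and>
           (\<forall>Es sg. spne pr p' Es sg \<longrightarrow> eq_policy pr p' Es sg = P)"
proof (rule exI[of _ pr0], rule exI[of _ "1/2"], rule exI[of _ 1], intro conjI allI impI)
  show "valid_params pr0" by (rule valid)
  show "(1/2::real) * real (nN pr0) \<in> \<nat>" by simp
  show "(1::real) * real (nN pr0) \<in> \<nat>" by simp
  show "\<exists>Es sg. spne pr0 (1/2) Es sg" using spne_half by blast
  show "\<exists>Es sg. spne pr0 1 Es sg" using spne_one by blast
  show "eq_policy pr0 (1/2) Es sg = S" if "spne pr0 (1/2) Es sg" for Es sg using all_half[OF that] .
  show "eq_policy pr0 1 Es sg = P" if "spne pr0 1 Es sg" for Es sg using all_one[OF that] .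
qed auto
end
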